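(* For a no-slip billiard system in a general billiard domain $\mathcal{B}\subset\mathbb{R}^n$ (not necessarily a cylinder), if the pre-collision state $(a,u,U)$ at a regular boundary point $a$ satisfies the rolling impact condition, then the post-collision state is given by $$C_a(u,U)=\big(u-2(u\cdot\nu_a)\nu_a,\ U\big),$$ i.e. the center-of-mass velocity is reflected specularly and the angular velocity matrix is unchanged.
   Context: The particle is a ball of radius $r>0$ with rotationally symmetric mass distribution of total mass $m$ and second-moment matrix per unit mass $\lambda I$, $\lambda=(r\gamma)^2/2$, $\gamma>0$; $c=\frac{1-\gamma^2}{1+\gamma^2}$, $s=\frac{2\gamma}{1+\gamma^2}$; for $a,b\in\mathbb{R}^n$, $a\wedge b\in\mathfrak{so}(n)$ is $(a\wedge b)x=(a\cdot x)b-(b\cdot x)a$. $\mathcal{B}$ is the set of admissible centers, $\nu_a$ the unit normal at $a\in\partial\mathcal{B}$ pointing into $\mathcal{B}$. A state is $(a,u,U)$, $u$ the center-of-mass velocity, $U\in\mathfrak{so}(n)$ the angular velocity matrix. The no-slip collision map is $C_a(u,U)=\big(cu-\tfrac{s}{\gamma}(u\cdot\nu_a)\nu_a+s\gamma rU\nu_a,\ \tfrac{s}{\gamma r}\nu_a\wedge u+U-\tfrac{s}{\gamma}\nu_a\wedge U\nu_a\big)$. The pre-collision state $(a,u,U)$ satisfies the rolling impact condition if the orthogonal projection of $v=u-rU\nu_a$ onto $T_a\partial\mathcal{B}$ is zero. *)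

theory Defs
  imports "HOL-Analysis.Analysis"
begin

text \<open>Vectors in R^n are \<open>real^'n\<close>; elements of so(n) are matrices \<open>real^'n^'n\<close>
  acting by \<open>*v\<close>, skew-symmetric: \<open>transpose U = - U\<close>.\<close>

definition skew :: "real^'n^'n \<Rightarrow> bool" where
  "skew U \<longleftrightarrow> transpose U = - U"

text \<open>\<open>(a \<wedge> b) x = (a \<bullet> x) b - (b \<bullet> x) a\<close>, as a matrix.\<close>
definition wedge :: "real^'n \<Rightarrow> real^'n \<Rightarrow> real^'n^'n" where
  "wedge a b = (\<chi> i j. a $ j * b $ i - b $ j * a $ i)"

definition cc :: "real \<Rightarrow> real" where
  "cc \<gamma> = (1 - \<gamma>\<^sup>2) / (1 + \<gamma>\<^sup>2)"

definition ss :: "real \<Rightarrow> real" where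
  "ss \<gamma> = 2 * \<gamma> / (1 + \<gamma>\<^sup>2)"

text \<open>No-slip collision map at a boundary point with inward unit normal \<open>\<nu>\<close>.\<close>
definition collision ::
  "real \<Rightarrow> real \<Rightarrow> real^'n \<Rightarrow> real^'n \<Rightarrow> real^'n^'n \<Rightarrow> (real^'n) \<times> (real^'n^'n)" where
  "collision r \<gamma> \<nu> u U =
     (cc \<gamma> *\<^sub>R u - (ss \<gamma> / \<gamma> * (u \<bullet> \<nu>)) *\<^sub>R \<nu> + (ss \<gamma> * \<gamma> * r) *\<^sub>R (U *v \<nu>),
      (ss \<gamma> / (\<gamma> * r)) *\<^sub>R wedge \<nu> u + U - (ss \<gamma> / \<gamma>) *\<^sub>R wedge \<nu> (U *v \<nu>))"

text \<open>Orthogonal projection onto the tangent space is \<open>closest_point\<close>. Tangent space to the boundary at a regular point with unit normal \<open>\<nu>\<close>.\<close>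
definition tangent_space :: "real^'n \<Rightarrow> (real^'n) set" where
  "tangent_space \<nu> = {x. x \<bullet> \<nu> = 0}"

definition rolling_impact :: "real \<Rightarrow> real^'n \<Rightarrow> real^'n \<Rightarrow> real^'n^'n \<Rightarrow> bool" where
  "rolling_impact r \<nu> u U \<longleftrightarrow> closest_point (tangent_space \<nu>) (u - r *\<^sub>R (U *v \<nu>)) = 0"

end

theory Submission
  imports Defs
begin

theorem proposition6p1:
  fixes B :: "(real^'n) set" and a :: "real^'n" and nu :: "real^'n \<Rightarrow> real^'n"
    and r \<gamma> :: real and u :: "real^'n" and U :: "real^'n^'n"
  assumes "r > 0" and "\<gamma> > 0"
    and "a \<in> frontier B" and "norm (nu a) = 1"
    and "skew U"
    and "rolling_impact r (nu a) u U"
  shows "collision r \<gamma> (nu a) u U = (u - (2 * (u \<bullet> nu a)) *\<^sub>R nu a, U)"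
proof -
  define n where "n = nu a"
  define w where "w = U *v n"
  define x where "x = u - r *\<^sub>R w"
  have nn: "n \<bullet> n = 1" using assms(4) unfolding n_def by (simp add: dot_square_norm)
  have "n v* U = - w"
  proof -
    have "n v* U = transpose U *v n" by simp
    also have "\<dots> = (- U) *v n" using assms(5) unfolding skew_def by simp
    also have "\<dots> = - (U *v n)" by (simp add: vec_eq_iff matrix_vector_mult_def sum_negf)
    finally show ?thesis unfolding w_def .
  qed
  hence "n \<bullet> w = - (w \<bullet> n)" using dot_lmul_matrix[of n U n] unfolding w_def[symmetric]
    by simp
  hence wn: "w \<bullet> n = 0" by (simp add: inner_commute)
  have cl: "closed (tangent_space n)" unfolding tangent_space_def
    using closed_hyperplane[of n 0] by (simp add: inner_commute)
  have cp: "closest_point (tangent_space n) x = 0"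
    using assms(6) unfolding rolling_impact_def x_def w_def n_def by simp
  define y where "y = x - (x \<bullet> n) *\<^sub>R n"
  have yT: "y \<in> tangent_space n" unfolding tangent_space_def y_def
    by (simp add: inner_diff_left nn)
  have "dist x 0 \<le> dist x y" using closest_point_le[OF cl yT, of x] cp by simp
  hence "norm x \<le> norm ((x \<bullet> n) *\<^sub>R n)" unfolding y_def dist_norm by simp
  hence "norm x \<le> \<bar>x \<bullet> n\<bar>" using assms(4) unfolding n_def by simp
  hence "(norm x)^2 \<le> (x \<bullet> n)^2" by (metis abs_le_square_iff abs_norm_cancel)
  moreover have "(norm y)^2 = (norm x)^2 - (x \<bullet> n)^2"
    unfolding y_def power2_norm_eq_inner
    by (simp add: inner_diff_left inner_diff_right nn inner_commute power2_eq_square)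
  ultimately have "(norm y)^2 \<le> 0" by linarith
  hence "norm y = 0" by simp
  hence "x = (x \<bullet> n) *\<^sub>R n" unfolding y_def by simp
  moreover have "x \<bullet> n = u \<bullet> n" unfolding x_def by (simp add: inner_diff_left wn)
  ultimately have ueq: "u = (u \<bullet> n) *\<^sub>R n + r *\<^sub>R w" unfolding x_def
    by (metis diff_add_cancel)
  define \<alpha> where "\<alpha> = u \<bullet> n"
  have g: "1 + \<gamma>\<^sup>2 \<noteq> 0" by (smt (verit) zero_le_power2)
  have sg: "ss \<gamma> / \<gamma> = 2 / (1 + \<gamma>\<^sup>2)" unfolding ss_def using assms(2) by simp
  have c1: "cc \<gamma> - ss \<gamma> / \<gamma> = -1"
  proof -
    have "cc \<gamma> - ss \<gamma> / \<gamma> = ((1 - \<gamma>\<^sup>2) - 2) / (1 + \<gamma>\<^sup>2)"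
      unfolding sg cc_def by (simp add: diff_divide_distrib)
    also have "(1 - \<gamma>\<^sup>2) - 2 = - (1 + \<gamma>\<^sup>2)" by simp
    finally show ?thesis using g by (simp only: divide_minus_left) simp
  qed
  have c2: "cc \<gamma> + ss \<gamma> * \<gamma> = 1"
  proof -
    have "cc \<gamma> + ss \<gamma> * \<gamma> = ((1 - \<gamma>\<^sup>2) + 2 * \<gamma>\<^sup>2) / (1 + \<gamma>\<^sup>2)"
      unfolding ss_def cc_def using assms(2) by (simp add: add_divide_distrib[symmetric] power2_eq_square)
    also have "(1 - \<gamma>\<^sup>2) + 2 * \<gamma>\<^sup>2 = 1 + \<gamma>\<^sup>2" by simp
    finally show ?thesis using g by simp
  qed
  have first: "cc \<gamma> *\<^sub>R u - (ss \<gamma> / \<gamma> * (u \<bullet> n)) *\<^sub>R n + (ss \<gamma> * \<gamma> * r) *\<^sub>R w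
      = u - (2 * (u \<bullet> n)) *\<^sub>R n"
  proof -
    have "cc \<gamma> *\<^sub>R u - (ss \<gamma> / \<gamma> * \<alpha>) *\<^sub>R n + (ss \<gamma> * \<gamma> * r) *\<^sub>R w
       = ((cc \<gamma> - ss \<gamma> / \<gamma>) * \<alpha>) *\<^sub>R n + ((cc \<gamma> + ss \<gamma> * \<gamma>) * r) *\<^sub>R w"
      apply (subst ueq) unfolding \<alpha>_def[symmetric] by (simp add: algebra_simps)
    also have "\<dots> = - \<alpha> *\<^sub>R n + r *\<^sub>R w" by (simp add: c1 c2)
    also have "\<dots> = u - (2 * \<alpha>) *\<^sub>R n" proof -
      have "(2*\<alpha>) *\<^sub>R n = \<alpha> *\<^sub>R n + \<alpha> *\<^sub>R n" by (simp add: scaleR_left_distrib[symmetric])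
      then show ?thesis using ueq unfolding \<alpha>_def[symmetric] by simp
    qed
    finally show ?thesis unfolding \<alpha>_def .
  qed
  have second: "(ss \<gamma> / (\<gamma> * r)) *\<^sub>R wedge n u + U - (ss \<gamma> / \<gamma>) *\<^sub>R wedge n w = U"
  proof -
    have "wedge n u = r *\<^sub>R wedge n w"
      apply (subst ueq) unfolding wedge_def by (simp add: vec_eq_iff algebra_simps)
    thus ?thesis using assms(1) by simp
  qed
  show ?thesis unfolding collision_def n_def[symmetric] w_def[symmetric] using first second by simp
qed

end
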